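(* Let $r\ge5$, let $T$ be a $K_r$-tree, let $G$ be a graph, and let $S=V(G)\cap V(T)$. Then, for any run of the $(r-2)_*$-BP process on $T$ with seed set $S$, every copy $\tilde H$ of $K_r$ that is completed by the $K_r$-dynamics started from $G\cup T$ satisfies $V(\tilde H)\subseteq V(G)\cup\langle S;T\rangle_*$.
   Context: A graph $T$ is a $K_r$-tree if it is the union of copies $H_1,\dots,H_\vartheta$ of $K_r$ such that for each $1<i\le\vartheta$, $H_i$ shares exactly one edge with $H_1\cup\cdots\cup H_{i-1}$ (the common vertices being exactly the two endpoints of that edge). An edge of $T$ is internal if it lies in at least two of the $H_i$. The $(r-2)_*$-bootstrap percolation process on $T$ with seed set $S\subseteq V(T)$: initially the vertices of $S$ are infected; in each step, either (usual step) some uninfected vertex with at least $r-2$ infected neighbors in $T$ becomes infected; or else (special step), if no usual step is possible but for some internal edge $f$ there are two copies $H_i\ne H_j$ containing $f$ such that $H_i$ has $r-4$ infected vertices and $H_j$ has $1$ infected vertex, all these $r-3$ vertices not in $f$, then an arbitrarily chosen vertex $u\in f$ becomes infected; otherwise the process terminates. $\langle S;T\rangle_*$ is the set of eventually infected vertices. The $K_r$-dynamics on a graph repeatedly adds an edge $e$ whenever there is a copy of $K_r$ in which $e$ is the only missing edge; such a copy is said to be completed by the dynamics (when $e$ is added). *)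

theory Defs
  imports Main
begin

(* A K_r-tree is given by the list Hs = [H_1,...,H_theta] of the vertex sets of the
   copies of K_r (a copy of K_r is determined by its vertex set). *)

definition Kr_tree :: "nat \<Rightarrow> 'a set list \<Rightarrow> bool" where
  "Kr_tree r Hs \<longleftrightarrow> Hs \<noteq> [] \<and>
     (\<forall>i < length Hs. finite (Hs ! i) \<and> card (Hs ! i) = r) \<and>
     (\<forall>i. 0 < i \<and> i < length Hs \<longrightarrow>
        (\<exists>u v. u \<noteq> v \<and> Hs ! i \<inter> (\<Union>j<i. Hs ! j) = {u, v} \<and>
               (\<exists>j<i. {u, v} \<subseteq> Hs ! j)))"

definition tree_verts :: "'a set list \<Rightarrow> 'a set" where
  "tree_verts Hs = \<Union> (set Hs)"

definition tree_edges :: "'a set list \<Rightarrow> 'a set set" where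
  "tree_edges Hs = {e. card e = 2 \<and> (\<exists>H \<in> set Hs. e \<subseteq> H)}"

definition tree_adj :: "'a set list \<Rightarrow> 'a \<Rightarrow> 'a \<Rightarrow> bool" where
  "tree_adj Hs v w \<longleftrightarrow> v \<noteq> w \<and> {v, w} \<in> tree_edges Hs"

definition internal_edge :: "'a set list \<Rightarrow> 'a set \<Rightarrow> bool" where
  "internal_edge Hs f \<longleftrightarrow> card f = 2 \<and>
     (\<exists>i j. i < length Hs \<and> j < length Hs \<and> i \<noteq> j \<and> f \<subseteq> Hs ! i \<and> f \<subseteq> Hs ! j)"

definition bp_usual_step :: "nat \<Rightarrow> 'a set list \<Rightarrow> 'a set \<Rightarrow> 'a \<Rightarrow> bool" where
  "bp_usual_step r Hs I v \<longleftrightarrow> v \<in> tree_verts Hs \<and> v \<notin> I \<and>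
     card {w \<in> I. tree_adj Hs v w} \<ge> r - 2"

definition bp_special_step :: "nat \<Rightarrow> 'a set list \<Rightarrow> 'a set \<Rightarrow> 'a \<Rightarrow> bool" where
  "bp_special_step r Hs I u \<longleftrightarrow> (\<nexists>v. bp_usual_step r Hs I v) \<and>
     (\<exists>f i j. internal_edge Hs f \<and> i < length Hs \<and> j < length Hs \<and> i \<noteq> j \<and>
        f \<subseteq> Hs ! i \<and> f \<subseteq> Hs ! j \<and>
        card (Hs ! i \<inter> I) = r - 4 \<and> card (Hs ! j \<inter> I) = 1 \<and>
        ((Hs ! i \<inter> I) \<union> (Hs ! j \<inter> I)) \<inter> f = {} \<and> u \<in> f)"

definition bp_step :: "nat \<Rightarrow> 'a set list \<Rightarrow> 'a set \<Rightarrow> 'a \<Rightarrow> bool" where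
  "bp_step r Hs I v \<longleftrightarrow> bp_usual_step r Hs I v \<or> bp_special_step r Hs I v"

(* a complete (terminated) run of the (r-2)_*-BP process on T with seed set S:
   the list vs of vertices infected in order; final infected set S \<union> set vs *)
definition bp_run :: "nat \<Rightarrow> 'a set list \<Rightarrow> 'a set \<Rightarrow> 'a list \<Rightarrow> bool" where
  "bp_run r Hs S vs \<longleftrightarrow>
     (\<forall>k < length vs. bp_step r Hs (S \<union> set (take k vs)) (vs ! k)) \<and>
     (\<nexists>v. bp_step r Hs (S \<union> set vs) v)"

(* K_r-dynamics on a graph with vertex set V and edge set E0: es is the list of added edges *)
definition dyn_run :: "nat \<Rightarrow> 'a set \<Rightarrow> 'a set set \<Rightarrow> 'a set list \<Rightarrow> bool" where
  "dyn_run r V E0 es \<longleftrightarrow>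
     (\<forall>k < length es.
        card (es ! k) = 2 \<and> es ! k \<notin> E0 \<union> set (take k es) \<and>
        (\<exists>K \<subseteq> V. card K = r \<and> es ! k \<subseteq> K \<and>
           (\<forall>p \<subseteq> K. card p = 2 \<and> p \<noteq> es ! k \<longrightarrow> p \<in> E0 \<union> set (take k es))))"

definition dyn_completed :: "nat \<Rightarrow> 'a set \<Rightarrow> 'a set set \<Rightarrow> 'a set list \<Rightarrow> 'a set \<Rightarrow> bool" where
  "dyn_completed r V E0 es K \<longleftrightarrow> K \<subseteq> V \<and> card K = r \<and>
     (\<exists>k < length es. es ! k \<subseteq> K \<and>
        (\<forall>p \<subseteq> K. card p = 2 \<and> p \<noteq> es ! k \<longrightarrow> p \<in> E0 \<union> set (take k es)))"

definition simple_graph :: "'a set \<Rightarrow> 'a set set \<Rightarrow> bool" where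
  "simple_graph V E \<longleftrightarrow> finite V \<and> (\<forall>e \<in> E. card e = 2 \<and> e \<subseteq> V)"

end

theory Submission
  imports Defs
begin
definition glue :: "'a set list \<Rightarrow> bool" where
  "glue Hs \<longleftrightarrow> (\<forall>i<length Hs. 0 < i \<longrightarrow> (\<exists>j<i. Hs ! i \<inter> (\<Union>k<i. Hs ! k) \<subseteq> Hs ! j))"

lemma UN_nth: "(\<Union>k<length xs. xs ! k) = \<Union>(set xs)"
  by (auto simp: set_conv_nth)

lemma glue_snoc:
  assumes "glue (xs @ [H])"
  shows "glue xs" and "xs \<noteq> [] \<Longrightarrow> \<exists>H'\<in>set xs. H \<inter> \<Union>(set xs) \<subseteq> H'"
proof -
  show "glue xs" unfolding glue_def
  proof (intro allI impI)
    fix i assume i: "i < length xs" "0 < i"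
    then obtain j where j: "j < i" "(xs@[H]) ! i \<inter> (\<Union>k<i. (xs@[H]) ! k) \<subseteq> (xs@[H]) ! j"
      using assms unfolding glue_def by (metis length_append_singleton less_SucI)
    have "(\<Union>k<i. (xs@[H]) ! k) = (\<Union>k<i. xs ! k)" using i by (auto simp: nth_append)
    then show "\<exists>j<i. xs ! i \<inter> (\<Union>k<i. xs ! k) \<subseteq> xs ! j" using j i by (auto simp: nth_append)
  qed
next
  assume ne: "xs \<noteq> []"
  then obtain j where j: "j < length xs" "(xs@[H]) ! length xs \<inter> (\<Union>k<length xs. (xs@[H]) ! k) \<subseteq> (xs@[H]) ! j"
    using assms unfolding glue_def by (metis length_append_singleton lessI length_greater_0_conv)
  have "(\<Union>k<length xs. (xs@[H]) ! k) = (\<Union>k<length xs. xs ! k)" by (auto simp: nth_append)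
  then have "H \<inter> \<Union>(set xs) \<subseteq> xs ! j" using j by (simp add: nth_append UN_nth)
  then show "\<exists>H'\<in>set xs. H \<inter> \<Union>(set xs) \<subseteq> H'" using j(1) nth_mem by blast
qed

lemma glue_clique:
  "glue Hs \<Longrightarrow> Hs \<noteq> [] \<Longrightarrow> C \<subseteq> \<Union>(set Hs) \<Longrightarrow>
   (\<forall>p\<in>C. \<forall>q\<in>C. p \<noteq> q \<longrightarrow> (\<exists>H\<in>set Hs. p \<in> H \<and> q \<in> H)) \<Longrightarrow> \<exists>H\<in>set Hs. C \<subseteq> H"
proof (induction Hs arbitrary: C rule: rev_induct)
  case Nil then show ?case by simp
next
  case (snoc H xs)
  show ?case
  proof (cases "xs = []")
    case True then show ?thesis using snoc.prems by auto
  next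
    case False
    have gx: "glue xs" using glue_snoc(1)[OF snoc.prems(1)] .
    obtain H' where H': "H' \<in> set xs" "H \<inter> \<Union>(set xs) \<subseteq> H'"
      using glue_snoc(2)[OF snoc.prems(1) False] by blast
    show ?thesis
    proof (cases "C \<subseteq> \<Union>(set xs)")
      case True
      have "\<forall>p\<in>C. \<forall>q\<in>C. p \<noteq> q \<longrightarrow> (\<exists>H\<in>set xs. p \<in> H \<and> q \<in> H)"
      proof (intro ballI impI)
        fix p q assume pq: "p \<in> C" "q \<in> C" "p \<noteq> q"
        then obtain H'' where "H'' \<in> set (xs @ [H])" "p \<in> H''" "q \<in> H''" using snoc.prems(4) by blast
        then show "\<exists>H\<in>set xs. p \<in> H \<and> q \<in> H"
        proof (cases "H'' = H")
          case True
          with \<open>p \<in> H''\<close> \<open>q \<in> H''\<close> have "p \<in> H'" "q \<in> H'" using H'(2) \<open>C \<subseteq> \<Union>(set xs)\<close> pq by blast+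
          then show ?thesis using H'(1) by blast
        next
          case False
          with \<open>H'' \<in> set (xs @ [H])\<close> have "H'' \<in> set xs" by simp
          then show ?thesis using \<open>p \<in> H''\<close> \<open>q \<in> H''\<close> by blast
        qed
      qed
      then obtain H0 where "H0 \<in> set xs" "C \<subseteq> H0" using snoc.IH[OF gx False True] by blast
      then show ?thesis by auto
    next
      case no: False
      then obtain a where a: "a \<in> C" "a \<notin> \<Union>(set xs)" by blast
      have "C \<subseteq> H"
      proof
        fix q assume q: "q \<in> C"
        show "q \<in> H"
        proof (cases "q = a")
          case True then show ?thesis using a snoc.prems(3) by auto
        next
          case False
          then obtain H'' where "H'' \<in> set (xs @ [H])" "a \<in> H''" "q \<in> H''" using snoc.prems(4) a q by metis
          then show ?thesis using a by auto
        qed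
      qed
      then show ?thesis by auto
    qed
  qed
qed

lemma glue_C4:
  "glue Hs \<Longrightarrow> (\<exists>H\<in>set Hs. a \<in> H \<and> x \<in> H) \<Longrightarrow> (\<exists>H\<in>set Hs. x \<in> H \<and> b \<in> H) \<Longrightarrow>
   (\<exists>H\<in>set Hs. b \<in> H \<and> y \<in> H) \<Longrightarrow> (\<exists>H\<in>set Hs. y \<in> H \<and> a \<in> H) \<Longrightarrow>
   (\<exists>H\<in>set Hs. a \<in> H \<and> b \<in> H) \<or> (\<exists>H\<in>set Hs. x \<in> H \<and> y \<in> H)"
proof (induction Hs rule: rev_induct)
  case Nil then show ?case by simp
next
  case (snoc H xs)
  show ?case
  proof (cases "xs = []")
    case True then show ?thesis using snoc.prems by auto
  next
    case False
    have gx: "glue xs" using glue_snoc(1)[OF snoc.prems(1)] .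
    obtain H' where H': "H' \<in> set xs" "H \<inter> \<Union>(set xs) \<subseteq> H'"
      using glue_snoc(2)[OF snoc.prems(1) False] by blast
    show ?thesis
    proof (cases "a \<in> \<Union>(set xs) \<and> b \<in> \<Union>(set xs) \<and> x \<in> \<Union>(set xs) \<and> y \<in> \<Union>(set xs)")
      case True
      have lift: "\<exists>H0\<in>set xs. p \<in> H0 \<and> q \<in> H0"
        if "\<exists>H0\<in>set (xs@[H]). p \<in> H0 \<and> q \<in> H0" "p \<in> \<Union>(set xs)" "q \<in> \<Union>(set xs)" for p q
        using that H' by auto
      have "(\<exists>H\<in>set xs. a \<in> H \<and> b \<in> H) \<or> (\<exists>H\<in>set xs. x \<in> H \<and> y \<in> H)"
        apply (rule snoc.IH[OF gx])
        using lift snoc.prems True by blast+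
      then show ?thesis by auto
    next
      case False
      have new: "p \<in> H \<and> q \<in> H"
        if n1: "\<exists>H0\<in>set (xs@[H]). p \<in> H0 \<and> q \<in> H0" and n2: "p \<notin> \<Union>(set xs)" for p q
      proof -
        obtain H0 where "H0 \<in> set (xs@[H])" "p \<in> H0" "q \<in> H0" using n1 by blast
        moreover have "H0 \<notin> set xs" using n2 \<open>p \<in> H0\<close> by blast
        ultimately show ?thesis by simp
      qed
      have sym: "\<exists>H0\<in>set (xs@[H]). q \<in> H0 \<and> p \<in> H0"
        if "\<exists>H0\<in>set (xs@[H]). p \<in> H0 \<and> q \<in> H0" for p q using that by blast
      have HH: "H \<in> set (xs@[H])" by simp
      from False consider "a \<notin> \<Union>(set xs)" | "b \<notin> \<Union>(set xs)" | "x \<notin> \<Union>(set xs)" | "y \<notin> \<Union>(set xs)"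
        by blast
      then show ?thesis
      proof cases
        case 1
        have "x \<in> H" "y \<in> H" using new[OF snoc.prems(2) 1] new[OF sym[OF snoc.prems(5)] 1] by auto
        then show ?thesis using HH by blast
      next
        case 2
        have "x \<in> H" "y \<in> H" using new[OF sym[OF snoc.prems(3)] 2] new[OF snoc.prems(4) 2] by auto
        then show ?thesis using HH by blast
      next
        case 3
        have "a \<in> H" "b \<in> H" using new[OF sym[OF snoc.prems(2)] 3] new[OF snoc.prems(3) 3] by auto
        then show ?thesis using HH by blast
      next
        case 4
        have "a \<in> H" "b \<in> H" using new[OF snoc.prems(5) 4] new[OF sym[OF snoc.prems(4)] 4] by auto
        then show ?thesis using HH by blast
      qed
    qed
  qed
qed

lemma Kr_glue: "Kr_tree r Hs \<Longrightarrow> glue Hs"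
  unfolding glue_def
proof (intro allI impI)
  fix i assume i: "i < length Hs" "0 < i" and K: "Kr_tree r Hs"
  then obtain u v where uv: "Hs ! i \<inter> (\<Union>j<i. Hs ! j) = {u, v}" "\<exists>j<i. {u, v} \<subseteq> Hs ! j"
    unfolding Kr_tree_def by blast
  then obtain j where "j < i" "{u,v} \<subseteq> Hs ! j" by blast
  then show "\<exists>j<i. Hs ! i \<inter> (\<Union>k<i. Hs ! k) \<subseteq> Hs ! j" using uv(1) by metis
qed

lemma tree_adj_iff: "tree_adj Hs v w \<longleftrightarrow> v \<noteq> w \<and> (\<exists>H\<in>set Hs. v \<in> H \<and> w \<in> H)"
  unfolding tree_adj_def tree_edges_def by auto

lemma tree_adj_sym: "tree_adj Hs v w \<Longrightarrow> tree_adj Hs w v"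
  unfolding tree_adj_iff by blast

lemma tree_adj_verts: "tree_adj Hs v w \<Longrightarrow> v \<in> tree_verts Hs \<and> w \<in> tree_verts Hs"
  unfolding tree_adj_iff tree_verts_def by blast

lemma Kr_finite: "Kr_tree r Hs \<Longrightarrow> finite (tree_verts Hs)"
  unfolding tree_verts_def
proof (rule finite_Union)
  assume K: "Kr_tree r Hs"
  show "finite (set Hs)" by simp
  show "\<And>H. H \<in> set Hs \<Longrightarrow> finite H"
  proof -
    fix H assume "H \<in> set Hs"
    then obtain i where "i < length Hs" "H = Hs ! i" by (metis in_set_conv_nth)
    then show "finite H" using K unfolding Kr_tree_def by blast
  qed
qed

lemma three_shared_aux:
  assumes "Kr_tree r Hs" "j < i" "i < length Hs"
    "p \<in> Hs!i" "q \<in> Hs!i" "s \<in> Hs!i" "p \<in> Hs!j" "q \<in> Hs!j" "s \<in> Hs!j"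
    "p \<noteq> q" "p \<noteq> s" "q \<noteq> s"
  shows False
proof -
  obtain u v where "Hs ! i \<inter> (\<Union>k<i. Hs ! k) = {u, v}"
    using assms(1-3) unfolding Kr_tree_def by (metis gr_zeroI not_less0)
  moreover have "p \<in> (\<Union>k<i. Hs ! k)" "q \<in> (\<Union>k<i. Hs ! k)" "s \<in> (\<Union>k<i. Hs ! k)"
    using assms by auto
  ultimately have "p \<in> {u,v}" "q \<in> {u,v}" "s \<in> {u,v}" using assms by blast+
  then show False using assms(10-12) by blast
qed

lemma three_shared:
  assumes "Kr_tree r Hs" "H \<in> set Hs" "H' \<in> set Hs"
    "p \<in> H" "q \<in> H" "s \<in> H" "p \<in> H'" "q \<in> H'" "s \<in> H'"
    "p \<noteq> q" "p \<noteq> s" "q \<noteq> s"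
  shows "H = H'"
proof -
  obtain i where i: "i < length Hs" "Hs ! i = H" using assms(2) by (metis in_set_conv_nth)
  obtain j where j: "j < length Hs" "Hs ! j = H'" using assms(3) by (metis in_set_conv_nth)
  show ?thesis
  proof (cases "i = j")
    case True then show ?thesis using i j by simp
  next
    case False
    then consider "j < i" | "i < j" by linarith
    then show ?thesis
    proof cases
      case 1 then show ?thesis using three_shared_aux[OF assms(1) 1 i(1)] assms i j by auto
    next
      case 2 then show ?thesis using three_shared_aux[OF assms(1) 2 j(1)] assms i j by auto
    qed
  qed
qed

lemma clique_in:
  assumes "Kr_tree r Hs" "C \<subseteq> tree_verts Hs" "\<forall>p\<in>C. \<forall>q\<in>C. p \<noteq> q \<longrightarrow> tree_adj Hs p q"
  shows "\<exists>H\<in>set Hs. C \<subseteq> H"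
proof (rule glue_clique[OF Kr_glue[OF assms(1)]])
  show "Hs \<noteq> []" using assms(1) unfolding Kr_tree_def by blast
  show "C \<subseteq> \<Union>(set Hs)" using assms(2) unfolding tree_verts_def .
  show "\<forall>p\<in>C. \<forall>q\<in>C. p \<noteq> q \<longrightarrow> (\<exists>H\<in>set Hs. p \<in> H \<and> q \<in> H)"
    using assms(3) unfolding tree_adj_iff by blast
qed

lemma clq4:
  assumes "Kr_tree r Hs" "tree_adj Hs p q" "tree_adj Hs p s" "tree_adj Hs p t"
    "tree_adj Hs q s" "tree_adj Hs q t" "tree_adj Hs s t"
  shows "\<exists>H\<in>set Hs. p \<in> H \<and> q \<in> H \<and> s \<in> H \<and> t \<in> H"
proof -
  have "\<exists>H\<in>set Hs. {p,q,s,t} \<subseteq> H"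
  proof (rule clique_in[OF assms(1)])
    show "{p,q,s,t} \<subseteq> tree_verts Hs" using tree_adj_verts[OF assms(2)] tree_adj_verts[OF assms(4)] tree_adj_verts[OF assms(7)] by simp
    show "\<forall>x\<in>{p,q,s,t}. \<forall>y\<in>{p,q,s,t}. x \<noteq> y \<longrightarrow> tree_adj Hs x y"
      using assms(2-) tree_adj_sym by auto
  qed
  then show ?thesis by auto
qed

lemma clq3:
  assumes "Kr_tree r Hs" "tree_adj Hs p q" "tree_adj Hs p s" "tree_adj Hs q s"
  shows "\<exists>H\<in>set Hs. p \<in> H \<and> q \<in> H \<and> s \<in> H"
proof -
  have "\<exists>H\<in>set Hs. {p,q,s} \<subseteq> H"
  proof (rule clique_in[OF assms(1)])
    show "{p,q,s} \<subseteq> tree_verts Hs" using tree_adj_verts[OF assms(2)] tree_adj_verts[OF assms(3)] by simp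
    show "\<forall>x\<in>{p,q,s}. \<forall>y\<in>{p,q,s}. x \<noteq> y \<longrightarrow> tree_adj Hs x y"
      using assms(2-) tree_adj_sym by auto
  qed
  then show ?thesis by auto
qed


lemma ne_of_card: "card S = r - k \<Longrightarrow> k < (r::nat) \<Longrightarrow> S \<noteq> {}"
  by auto

lemma card4: "card {w,x,y,z} \<le> 4"
  by (simp add: card_insert_if)

lemma card2: "card {w,x} \<le> 2"
  by (simp add: card_insert_if)

lemma core:
  assumes r5: "r \<ge> 5" and KT: "Kr_tree r Hs" and SG: "simple_graph VG EG"
    and SA: "VG \<inter> tree_verts Hs \<subseteq> A"
    and closed: "\<forall>v. \<not> bp_step r Hs A v"
    and FW: "\<forall>g\<in>F. g \<subseteq> VG \<union> A"
    and KV: "K \<subseteq> VG \<union> tree_verts Hs" and cK: "card K = r"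
    and eK: "e \<subseteq> K" and ce: "card e = 2" and enot: "e \<notin> EG \<union> tree_edges Hs \<union> F"
    and pairs: "\<forall>p\<subseteq>K. card p = 2 \<and> p \<noteq> e \<longrightarrow> p \<in> EG \<union> tree_edges Hs \<union> F"
  shows "K \<subseteq> VG \<union> A"
proof (rule ccontr)
  assume notsub: "\<not> K \<subseteq> VG \<union> A"
  define W where "W = VG \<union> A"
  obtain a b where ab: "e = {a,b}" "a \<noteq> b" using ce by (meson card_2_iff)
  have finT: "finite (tree_verts Hs)" using Kr_finite[OF KT] .
  have finK: "finite K" using cK r5 card.infinite by fastforce
  have nousual: "\<not> bp_usual_step r Hs A v" for v using closed unfolding bp_step_def by blast
  have noU: "card {w\<in>A. tree_adj Hs t w} \<le> r - 3" if "t \<in> tree_verts Hs" "t \<notin> A" for t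
    using nousual[of t] that r5 unfolding bp_usual_step_def by auto
  have finN: "finite {w\<in>A. tree_adj Hs t w}" for t
    by (rule finite_subset[OF _ finT]) (auto dest: tree_adj_verts)
  have adjU: "tree_adj Hs u x" if "u \<in> K" "u \<notin> W" "x \<in> K" "x \<noteq> u" "{u,x} \<noteq> e" for u x
  proof -
    have "card {u,x} = 2" using that(4) by auto
    then have "{u,x} \<in> EG \<union> tree_edges Hs \<union> F" using pairs that by auto
    moreover have "{u,x} \<notin> EG" using SG that(2) unfolding simple_graph_def W_def by blast
    moreover have "{u,x} \<notin> F" using FW that(2) unfolding W_def by blast
    ultimately have "{u,x} \<in> tree_edges Hs" by blast
    then show ?thesis unfolding tree_adj_def using that(4) by auto
  qed
  have enotT: "\<not> (\<exists>H\<in>set Hs. a \<in> H \<and> b \<in> H)"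
  proof
    assume "\<exists>H\<in>set Hs. a \<in> H \<and> b \<in> H"
    then have "e \<in> tree_edges Hs" using ab ce unfolding tree_edges_def by auto
    then show False using enot by blast
  qed
  have UT: "u \<in> tree_verts Hs" if "u \<in> K" "u \<notin> W" for u using that KV unfolding W_def by blast
  define U where "U = K - W"
  define Q where "Q = U - {a,b}"
  define P where "P = K - U"
  have UK: "U \<subseteq> K" unfolding U_def by blast
  have Qne: "\<exists>c. c \<in> Q"
  proof -
    obtain v where v: "v \<in> K" "v \<notin> W" using notsub unfolding W_def by blast
    show ?thesis
    proof (cases "v \<in> {a,b}")
      case False then show ?thesis using v unfolding Q_def U_def by blast
    next
      case True
      have vadj: "tree_adj Hs v x" if "x \<in> K - {a,b}" for x
        using adjU[OF v(1) v(2)] that True ab by auto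
      show ?thesis
      proof (rule ccontr)
        assume "\<nexists>c. c \<in> Q"
        have sub: "K - {a,b} \<subseteq> {w\<in>A. tree_adj Hs v w}"
        proof
          fix x assume x: "x \<in> K - {a,b}"
          have xa: "tree_adj Hs v x" using vadj x by blast
          have "x \<in> tree_verts Hs" using tree_adj_verts[OF xa] by blast
          moreover have "x \<notin> Q" using \<open>\<nexists>c. c \<in> Q\<close> by blast
          ultimately have "x \<in> A" using x SA unfolding Q_def U_def W_def by blast
          then show "x \<in> {w\<in>A. tree_adj Hs v w}" using xa by blast
        qed
        have "card (K - {a,b}) = r - 2" using cK eK ab finK by (simp add: card_Diff_subset)
        moreover have "card (K - {a,b}) \<le> r - 3"
          using card_mono[OF finN sub] noU[OF UT[OF v] ] v(2) unfolding W_def by auto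
        ultimately show False using r5 by linarith
      qed
    qed
  qed
  have Qadj: "tree_adj Hs q x" if "q \<in> Q" "x \<in> K" "x \<noteq> q" for q x
    using adjU[of q x] that ab unfolding Q_def U_def by auto
  obtain c where c: "c \<in> Q" using Qne by blast
  have KsubT: "K \<subseteq> tree_verts Hs"
  proof
    fix x assume "x \<in> K"
    show "x \<in> tree_verts Hs"
    proof (cases "x = c")
      case True then show ?thesis using c UT unfolding Q_def U_def by blast
    next
      case False then show ?thesis using tree_adj_verts[OF Qadj[OF c \<open>x \<in> K\<close>]] by blast
    qed
  qed
  have PA: "P \<subseteq> A" using KsubT SA unfolding P_def U_def W_def by blast
  have PN: "P \<subseteq> {w\<in>A. tree_adj Hs q w}" if "q \<in> Q" for q
  proof
    fix x assume x: "x \<in> P"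
    have "x \<noteq> q" using x that unfolding P_def Q_def by blast
    then show "x \<in> {w\<in>A. tree_adj Hs q w}" using Qadj[OF that] x PA unfolding P_def by blast
  qed
  have QT: "q \<in> tree_verts Hs" "q \<notin> A" if "q \<in> Q" for q
    using that KsubT unfolding Q_def U_def W_def by auto
  have cardP: "card P \<le> r - 3" using card_mono[OF finN PN[OF c]] noU[OF QT[OF c]] by linarith
  have cardKUP: "card K = card U + card P"
    unfolding P_def using card_Diff_subset[OF finite_subset[OF UK finK] UK] card_mono[OF finK UK] by linarith
  have cardU: "card U \<ge> 3" using cardKUP cardP cK r5 by linarith
  have Ueq: "U \<subseteq> Q \<union> {a,b}" unfolding Q_def by blast
  have UW: "u \<notin> W" if "u \<in> U" for u using that unfolding U_def by blast
  have three: "H = H'" if "H \<in> set Hs" "H' \<in> set Hs" "p \<in> H" "q \<in> H" "s \<in> H" "p \<in> H'" "q \<in> H'" "s \<in> H'"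
    "p \<noteq> q" "p \<noteq> s" "q \<noteq> s" for H H' p q s
    using three_shared[OF KT that] .
  have QK: "Q \<subseteq> K" unfolding Q_def U_def by blast
  have Qnab: "q \<noteq> a" "q \<noteq> b" if "q \<in> Q" for q using that unfolding Q_def by auto
  show False
  proof (cases "\<exists>c1 c2 c3. c1 \<in> Q \<and> c2 \<in> Q \<and> c3 \<in> Q \<and> c1 \<noteq> c2 \<and> c1 \<noteq> c3 \<and> c2 \<noteq> c3")
    case True
    then obtain c1 c2 c3 where cs: "c1 \<in> Q" "c2 \<in> Q" "c3 \<in> Q" "c1 \<noteq> c2" "c1 \<noteq> c3" "c2 \<noteq> c3" by blast
    have aK: "a \<in> K" "b \<in> K" using eK ab by auto
    obtain H where H: "H \<in> set Hs" "c1 \<in> H" "c2 \<in> H" "c3 \<in> H" "a \<in> H"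
      using clq4[OF KT Qadj[OF cs(1) QK[THEN subsetD, OF cs(2)]] Qadj[OF cs(1) QK[THEN subsetD, OF cs(3)]]
          Qadj[OF cs(1) aK(1)] Qadj[OF cs(2) QK[THEN subsetD, OF cs(3)]] Qadj[OF cs(2) aK(1)] Qadj[OF cs(3) aK(1)]]
        cs Qnab by auto
    obtain H' where H': "H' \<in> set Hs" "c1 \<in> H'" "c2 \<in> H'" "c3 \<in> H'" "b \<in> H'"
      using clq4[OF KT Qadj[OF cs(1) QK[THEN subsetD, OF cs(2)]] Qadj[OF cs(1) QK[THEN subsetD, OF cs(3)]]
          Qadj[OF cs(1) aK(2)] Qadj[OF cs(2) QK[THEN subsetD, OF cs(3)]] Qadj[OF cs(2) aK(2)] Qadj[OF cs(3) aK(2)]]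
        cs Qnab by auto
    have "H = H'" using three[OF H(1) H'(1) H(2-4) H'(2-4) cs(4-6)] .
    then show False using enotT H H' by blast
  next
    case notthree: False
    have aK: "a \<in> K" "b \<in> K" using eK ab by auto
    show False
    proof (cases "\<exists>c1 c2. c1 \<in> Q \<and> c2 \<in> Q \<and> c1 \<noteq> c2")
      case True
      then obtain c1 c2 where cs: "c1 \<in> Q" "c2 \<in> Q" "c1 \<noteq> c2" by blast
      have Q2: "Q \<subseteq> {c1,c2}" using notthree cs by blast
      have c1K: "c1 \<in> K" and c2K: "c2 \<in> K" using cs QK by auto
      have sub2: False if ab': "{a',b'} = {a,b}" "a' \<noteq> b'" "a' \<in> U" for a' b'
      proof -
        have e': "e = {a',b'}" using ab ab' by simp
        have enotT': "\<not> (\<exists>H\<in>set Hs. a' \<in> H \<and> b' \<in> H)" using enotT ab' by (auto simp: doubleton_eq_iff)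
        have a'K: "a' \<in> K" "b' \<in> K" using aK ab' by (auto simp: doubleton_eq_iff)
        have ca: "c1 \<noteq> a'" "c2 \<noteq> a'" "c1 \<noteq> b'" "c2 \<noteq> b'" using Qnab cs ab' by (auto simp: doubleton_eq_iff)
        have a'adj: "tree_adj Hs a' x" if "x \<in> K" "x \<noteq> a'" "x \<noteq> b'" for x
          using adjU[OF a'K(1) UW[OF ab'(3)] that(1,2)] that e' ab'(2) by (auto simp: doubleton_eq_iff)
        show False
        proof (cases "b' \<in> U")
          case True
          have "\<not> K \<subseteq> {a',b',c1,c2}" using card_mono[of "{a',b',c1,c2}" K] card4[of a' b' c1 c2] cK r5 by auto
          then obtain x where x: "x \<in> K" "x \<notin> {a',b',c1,c2}" by blast
          have b'adj: "tree_adj Hs b' x"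
            using adjU[OF a'K(2) UW[OF True] x(1)] x e' ab'(2) by (auto simp: doubleton_eq_iff)
          obtain H where H: "H \<in> set Hs" "c1 \<in> H" "c2 \<in> H" "a' \<in> H" "x \<in> H"
            using clq4[OF KT Qadj[OF cs(1) c2K] Qadj[OF cs(1) a'K(1)] Qadj[OF cs(1) x(1)]
              Qadj[OF cs(2) a'K(1)] Qadj[OF cs(2) x(1)] a'adj[OF x(1)]] x ca cs by auto
          obtain H' where H': "H' \<in> set Hs" "c1 \<in> H'" "c2 \<in> H'" "b' \<in> H'" "x \<in> H'"
            using clq4[OF KT Qadj[OF cs(1) c2K] Qadj[OF cs(1) a'K(2)] Qadj[OF cs(1) x(1)]
              Qadj[OF cs(2) a'K(2)] Qadj[OF cs(2) x(1)] b'adj] x ca cs by auto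
          have "H = H'" using three[OF H(1) H'(1), of c1 c2 x] H H' x cs by auto
          then show False using enotT' H H' by blast
        next
          case False
          have Ueq3: "U = {a',c1,c2}" using Ueq Q2 ab' False cs ab'(3) unfolding Q_def by blast
          have "card U = 3" using Ueq3 ca cs by auto
          then have cP: "card P = r - 3" using cardKUP cK by linarith
          define N1 where "N1 = {w\<in>A. tree_adj Hs c1 w}"
          have PN1: "P = N1"
          proof (rule card_subset_eq)
            show "finite N1" unfolding N1_def by (rule finN)
            show "P \<subseteq> N1" unfolding N1_def by (rule PN[OF cs(1)])
            have "card N1 \<le> r - 3" unfolding N1_def using noU[OF QT[OF cs(1)]] .
            moreover have "card P \<le> card N1" using card_mono[OF \<open>finite N1\<close> \<open>P \<subseteq> N1\<close>] .
            ultimately show "card P = card N1" using cP by linarith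
          qed
          have b'P: "b' \<in> P" using a'K False unfolding P_def by blast
          define P' where "P' = P - {b'}"
          have finP: "finite P" unfolding P_def using finK by blast
          have cP': "card P' = r - 4" unfolding P'_def using b'P cP finP by (simp add: card_Diff_singleton)
          have "P' \<noteq> {}" using cP' r5 by auto
          then obtain x0 where x0: "x0 \<in> P'" by blast
          have P'K: "x \<in> K" "x \<noteq> a'" "x \<noteq> b'" "x \<noteq> c1" "x \<noteq> c2" if "x \<in> P'" for x
            using that Ueq3 unfolding P'_def P_def by auto
          have inH: "\<exists>H\<in>set Hs. c1 \<in> H \<and> c2 \<in> H \<and> a' \<in> H \<and> x \<in> H" if "x \<in> P'" for x
            using clq4[OF KT Qadj[OF cs(1) c2K] Qadj[OF cs(1) a'K(1)] Qadj[OF cs(1) P'K(1)[OF that]]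
              Qadj[OF cs(2) a'K(1)] Qadj[OF cs(2) P'K(1)[OF that]] a'adj[OF P'K(1-3)[OF that]]] ca cs P'K[OF that]
            by auto
          obtain H1 where H1: "H1 \<in> set Hs" "c1 \<in> H1" "c2 \<in> H1" "a' \<in> H1" "x0 \<in> H1"
            using inH[OF x0] by blast
          have P'H1: "P' \<subseteq> H1"
          proof
            fix x assume x: "x \<in> P'"
            obtain Hx where Hx: "Hx \<in> set Hs" "c1 \<in> Hx" "c2 \<in> Hx" "a' \<in> Hx" "x \<in> Hx" using inH[OF x] by blast
            have "Hx = H1" using three[OF Hx(1) H1(1) Hx(2-4) H1(2-4)] cs ca by auto
            then show "x \<in> H1" using Hx by blast
          qed
          have b'H1: "b' \<notin> H1" using enotT' H1 by blast
          obtain H2 where H2: "H2 \<in> set Hs" "c1 \<in> H2" "c2 \<in> H2" "b' \<in> H2"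
            using clq3[OF KT Qadj[OF cs(1) c2K] Qadj[OF cs(1) a'K(2)] Qadj[OF cs(2) a'K(2)]] ca cs by auto
          have H12: "H1 \<noteq> H2" using b'H1 H2 by blast
          have inN1: "w \<in> P" if "w \<in> H" "H \<in> set Hs" "c1 \<in> H" "w \<in> A" for w H
          proof -
            have "w \<noteq> c1" using that QT[OF cs(1)] by blast
            then have "tree_adj Hs c1 w" unfolding tree_adj_iff using that by blast
            then show ?thesis using PN1 that unfolding N1_def by blast
          qed
          have A1: "H1 \<inter> A = P'"
          proof
            show "H1 \<inter> A \<subseteq> P'" using inN1[OF _ H1(1) H1(2)] b'H1 unfolding P'_def by blast
            show "P' \<subseteq> H1 \<inter> A" using P'H1 PA unfolding P'_def by blast
          qed
          have A2: "H2 \<inter> A = {b'}"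
          proof
            show "{b'} \<subseteq> H2 \<inter> A" using H2 b'P PA by blast
            show "H2 \<inter> A \<subseteq> {b'}"
            proof
              fix w assume w: "w \<in> H2 \<inter> A"
              have "w \<in> P" using inN1[OF _ H2(1) H2(2)] w by blast
              show "w \<in> {b'}"
              proof (rule ccontr)
                assume "w \<notin> {b'}"
                then have wP': "w \<in> P'" using \<open>w \<in> P\<close> unfolding P'_def by blast
                have "H1 = H2" using three[OF H1(1) H2(1) H1(2,3) P'H1[THEN subsetD, OF wP'] H2(2,3)] w cs P'K[OF wP'] by auto
                then show False using H12 by blast
              qed
            qed
          qed
          obtain i where i: "i < length Hs" "Hs ! i = H1" using H1(1) by (metis in_set_conv_nth)
          obtain j where j: "j < length Hs" "Hs ! j = H2" using H2(1) by (metis in_set_conv_nth)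
          have ij: "i \<noteq> j" using i j H12 by blast
          have c12A: "c1 \<notin> A" "c2 \<notin> A" using QT cs by auto
          have "bp_special_step r Hs A c1"
            unfolding bp_special_step_def
          proof (intro conjI)
            show "\<nexists>v. bp_usual_step r Hs A v" using nousual by blast
            show "\<exists>f i j. internal_edge Hs f \<and> i < length Hs \<and> j < length Hs \<and> i \<noteq> j \<and>
              f \<subseteq> Hs ! i \<and> f \<subseteq> Hs ! j \<and> card (Hs ! i \<inter> A) = r - 4 \<and> card (Hs ! j \<inter> A) = 1 \<and>
              (Hs ! i \<inter> A \<union> Hs ! j \<inter> A) \<inter> f = {} \<and> c1 \<in> f"
            proof (intro exI conjI)
              show "internal_edge Hs {c1,c2}" unfolding internal_edge_def
                using i j ij H1 H2 cs(3) by (intro conjI exI[of _ i] exI[of _ j]) auto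
              show "card (Hs ! i \<inter> A) = r - 4" using i A1 cP' by simp
              show "card (Hs ! j \<inter> A) = 1" using j A2 by simp
              show "(Hs ! i \<inter> A \<union> Hs ! j \<inter> A) \<inter> {c1,c2} = {}" using c12A by blast
            qed (use i j ij H1 H2 in auto)
          qed
          then show False using closed unfolding bp_step_def by blast
        qed
      qed
      have "a \<in> U \<or> b \<in> U"
      proof (rule ccontr)
        assume "\<not> (a \<in> U \<or> b \<in> U)"
        then have "U \<subseteq> {c1,c2}" using Ueq Q2 by blast
        then have "card U \<le> 2" using card_mono[of "{c1,c2}" U] card2[of c1 c2] by auto
        then show False using cardU by linarith
      qed
      then show False
      proof
        assume "a \<in> U" then show False using sub2[of a b] ab by blast
      next
        assume "b \<in> U" then show False using sub2[of b a] ab by blast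
      qed
    next
      case False
      have Q1: "Q \<subseteq> {c}" using False c by blast
      have abU: "a \<in> U" "b \<in> U"
      proof -
        have c2: "card U \<le> 2" if "U \<subseteq> {c,z}" for z using card_mono[of "{c,z}" U] card2[of c z] that by auto
        show "a \<in> U"
        proof (rule ccontr)
          assume "a \<notin> U" then have "U \<subseteq> {c,b}" using Ueq Q1 by blast
          then show False using c2[of b] cardU by linarith
        qed
        show "b \<in> U"
        proof (rule ccontr)
          assume "b \<notin> U" then have "U \<subseteq> {c,a}" using Ueq Q1 by blast
          then show False using c2[of a] cardU by linarith
        qed
      qed
      have Ueq3: "U = {a,b,c}" using Ueq Q1 abU c unfolding Q_def by blast
      have "card U = 3" using Ueq3 Qnab[OF c] ab by auto
      then have cP: "card P = r - 3" using cardKUP cK by linarith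
      have "P \<noteq> {}" using cP r5 by auto
      then obtain x where x: "x \<in> P" by blast
      have finP: "finite P" unfolding P_def using finK by blast
      have "card (P - {x}) = r - 4" using x cP finP by (simp add: card_Diff_singleton)
      then have "P - {x} \<noteq> {}" using r5 by (intro ne_of_card[of _ r 4]) auto
      then obtain y where y: "y \<in> P - {x}" by blast
      have Pd: "z \<in> K" "z \<noteq> a" "z \<noteq> b" "z \<noteq> c" if "z \<in> P" for z using that Ueq3 unfolding P_def by auto
      have xy: "x \<noteq> y" "y \<in> P" using y by auto
      have adjab: "tree_adj Hs a z" "tree_adj Hs b z" if "z \<in> P" for z
        using adjU[OF aK(1) UW[OF abU(1)] Pd(1)[OF that]] adjU[OF aK(2) UW[OF abU(2)] Pd(1)[OF that]]
          Pd[OF that] ab by (auto simp: doubleton_eq_iff)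
      have g1: "\<exists>H\<in>set Hs. a \<in> H \<and> x \<in> H" using adjab(1)[OF x] unfolding tree_adj_iff by blast
      have g2: "\<exists>H\<in>set Hs. x \<in> H \<and> b \<in> H" using adjab(2)[OF x] unfolding tree_adj_iff by blast
      have g3: "\<exists>H\<in>set Hs. b \<in> H \<and> y \<in> H" using adjab(2)[OF xy(2)] unfolding tree_adj_iff by blast
      have g4: "\<exists>H\<in>set Hs. y \<in> H \<and> a \<in> H" using adjab(1)[OF xy(2)] unfolding tree_adj_iff by blast
      have "(\<exists>H\<in>set Hs. a \<in> H \<and> b \<in> H) \<or> (\<exists>H\<in>set Hs. x \<in> H \<and> y \<in> H)"
        by (rule glue_C4[OF Kr_glue[OF KT] g1 g2 g3 g4])
      then have "\<exists>H\<in>set Hs. x \<in> H \<and> y \<in> H" using enotT by (elim disjE) simp_all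
      then have "tree_adj Hs x y" using xy(1) unfolding tree_adj_iff by blast
      then have xyadj: "tree_adj Hs x y" "tree_adj Hs y x" using tree_adj_sym by auto
      have cK': "c \<in> K" using c QK by blast
      obtain H where H: "H \<in> set Hs" "c \<in> H" "x \<in> H" "y \<in> H" "a \<in> H"
        using clq4[OF KT Qadj[OF c Pd(1)[OF x]] Qadj[OF c Pd(1)[OF xy(2)]] Qadj[OF c aK(1)]
          xyadj(1) tree_adj_sym[OF adjab(1)[OF x]] tree_adj_sym[OF adjab(1)[OF xy(2)]]] Pd[OF x] Pd[OF xy(2)] Qnab[OF c] by auto
      obtain H' where H': "H' \<in> set Hs" "c \<in> H'" "x \<in> H'" "y \<in> H'" "b \<in> H'"
        using clq4[OF KT Qadj[OF c Pd(1)[OF x]] Qadj[OF c Pd(1)[OF xy(2)]] Qadj[OF c aK(2)]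
          xyadj(1) tree_adj_sym[OF adjab(2)[OF x]] tree_adj_sym[OF adjab(2)[OF xy(2)]]] Pd[OF x] Pd[OF xy(2)] Qnab[OF c] by auto
      have "H = H'" using three[OF H(1) H'(1) H(2-4) H'(2-4)] Pd[OF x] Pd[OF xy(2)] xy by auto
      then show False using enotT H H' by blast
    qed
  qed
qed


theorem corollary6p4:
  fixes r :: nat and Hs :: "'a set list" and VG :: "'a set" and EG :: "'a set set"
    and vs :: "'a list" and es :: "'a set list" and K :: "'a set"
  assumes "r \<ge> 5"
    and "Kr_tree r Hs"
    and "simple_graph VG EG"
    and "bp_run r Hs (VG \<inter> tree_verts Hs) vs"
    and "dyn_run r (VG \<union> tree_verts Hs) (EG \<union> tree_edges Hs) es"
    and "dyn_completed r (VG \<union> tree_verts Hs) (EG \<union> tree_edges Hs) es K"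
  shows "K \<subseteq> VG \<union> ((VG \<inter> tree_verts Hs) \<union> set vs)"
proof -
  define A where "A = (VG \<inter> tree_verts Hs) \<union> set vs"
  have closed: "\<forall>v. \<not> bp_step r Hs A v" using assms(4) unfolding bp_run_def A_def by simp
  have SA: "VG \<inter> tree_verts Hs \<subseteq> A" unfolding A_def by blast
  have edges: "es ! k \<subseteq> VG \<union> A" if "k < length es" for k
    using that
  proof (induction k rule: less_induct)
    case (less k)
    have D: "card (es ! k) = 2 \<and> es ! k \<notin> EG \<union> tree_edges Hs \<union> set (take k es) \<and>
        (\<exists>K \<subseteq> VG \<union> tree_verts Hs. card K = r \<and> es ! k \<subseteq> K \<and>
           (\<forall>p \<subseteq> K. card p = 2 \<and> p \<noteq> es ! k \<longrightarrow> p \<in> EG \<union> tree_edges Hs \<union> set (take k es)))"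
      using assms(5) less.prems unfolding dyn_run_def by (elim allE[of _ k]) simp
    then have ek: "card (es ! k) = 2" "es ! k \<notin> EG \<union> tree_edges Hs \<union> set (take k es)" by simp_all
    from D obtain K' where K': "K' \<subseteq> VG \<union> tree_verts Hs" "card K' = r" "es ! k \<subseteq> K'"
      "\<forall>p\<subseteq>K'. card p = 2 \<and> p \<noteq> es ! k \<longrightarrow> p \<in> EG \<union> tree_edges Hs \<union> set (take k es)"
      by blast
    have FW: "\<forall>g\<in>set (take k es). g \<subseteq> VG \<union> A"
    proof
      fix g assume "g \<in> set (take k es)"
      then obtain m where m: "m < length (take k es)" "g = take k es ! m" by (metis in_set_conv_nth)
      then have "m < k" "g = es ! m" by auto
      then show "g \<subseteq> VG \<union> A" using less.IH less.prems by simp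
    qed
    have "K' \<subseteq> VG \<union> A"
      using core[OF assms(1-3) SA closed FW K'(1,2,3) ek(1,2) K'(4)] .
    then show ?case using K'(3) by blast
  qed
  obtain k where k: "k < length es" "es ! k \<subseteq> K"
    "\<forall>p\<subseteq>K. card p = 2 \<and> p \<noteq> es ! k \<longrightarrow> p \<in> EG \<union> tree_edges Hs \<union> set (take k es)"
    using assms(6) unfolding dyn_completed_def by auto
  have KV: "K \<subseteq> VG \<union> tree_verts Hs" "card K = r" using assms(6) unfolding dyn_completed_def by simp_all
  have ek: "card (es ! k) = 2" "es ! k \<notin> EG \<union> tree_edges Hs \<union> set (take k es)"
    using assms(5) k(1) unfolding dyn_run_def by (elim allE[of _ k], simp)+
  have FW: "\<forall>g\<in>set (take k es). g \<subseteq> VG \<union> A"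
  proof
    fix g assume "g \<in> set (take k es)"
    then obtain m where m: "m < length (take k es)" "g = take k es ! m" by (metis in_set_conv_nth)
    then have "m < length es" "g = es ! m" by auto
    then show "g \<subseteq> VG \<union> A" using edges by simp
  qed
  have "K \<subseteq> VG \<union> A" using core[OF assms(1-3) SA closed FW KV k(2) ek k(3)] .
  then show ?thesis unfolding A_def .
qed

end
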